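(* Let $M\in\mathbb{N}$, $M\ge1$, and let $r$ be a strong solution of the BVP. Then $r(R)\ge0$ for all $R\in[0,1]$ and $\dot r(R)\ge0$ for all $R\in(0,1]$.
   Context: Fix constants $\gamma>0$, $s_0\ge0$, $\kappa\ge-\gamma s_0$ and a convex function $\rho\in C^\infty(\mathbb{R})$ with $\rho(s)=0$ for $s\le0$, $\rho(s)=\gamma s+\kappa$ for $s\ge s_0$, and $\rho=\rho_1$ on $[0,s_0]$ where $\rho_1$ is smooth and convex with $\rho_1(0)=0$, $\rho_1(s_0)=\gamma s_0+\kappa$. For $M\in\mathbb{N}\setminus\{0\}$ and a function $r$ on $(0,1]$ let $d(R)=\frac{Mr(R)\dot r(R)}{R}$ and $Lr(R)=\frac{M^2r}{R}-\dot r-R\ddot r$. A strong solution of the BVP is a function $r\in C([0,1])\cap C^\infty((0,1])$ with $Lr=M\rho''(d)\dot d\,r$ on $(0,1)$, $r(0)=0$ and $r(1)=1$. *)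

theory Defs
  imports "HOL-Analysis.Analysis"
begin

text \<open>C-infinity on a set S: there is a family of successive derivatives D n
  (derivatives taken within S; for S open these are ordinary derivatives,
  for S = (0,1] one-sided at the endpoint 1).\<close>
definition Cinf_derivs :: "real set \<Rightarrow> (real \<Rightarrow> real) \<Rightarrow> (nat \<Rightarrow> real \<Rightarrow> real) \<Rightarrow> bool" where
  "Cinf_derivs S f D \<longleftrightarrow> (\<forall>x\<in>S. D 0 x = f x) \<and>
     (\<forall>n. \<forall>x\<in>S. (D n has_real_derivative D (Suc n) x) (at x within S))"

definition Cinf_on :: "real set \<Rightarrow> (real \<Rightarrow> real) \<Rightarrow> bool" where
  "Cinf_on S f \<longleftrightarrow> (\<exists>D. Cinf_derivs S f D)"

definition rho_assms :: "real \<Rightarrow> real \<Rightarrow> real \<Rightarrow> (real \<Rightarrow> real) \<Rightarrow> bool" where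
  "rho_assms \<gamma> s0 \<kappa> \<rho> \<longleftrightarrow>
     \<gamma> > 0 \<and> s0 \<ge> 0 \<and> \<kappa> \<ge> - \<gamma> * s0 \<and>
     Cinf_on UNIV \<rho> \<and> convex_on UNIV \<rho> \<and>
     (\<forall>s\<le>0. \<rho> s = 0) \<and> (\<forall>s\<ge>s0. \<rho> s = \<gamma> * s + \<kappa>) \<and>
     (\<exists>\<rho>1. Cinf_on {0..s0} \<rho>1 \<and> convex_on {0..s0} \<rho>1 \<and>
        \<rho>1 0 = 0 \<and> \<rho>1 s0 = \<gamma> * s0 + \<kappa> \<and> (\<forall>s\<in>{0..s0}. \<rho> s = \<rho>1 s))"

text \<open>Strong solution r of the BVP, with Dr the family of derivatives of r on (0,1]
  (Dr 1 = r-dot, Dr 2 = r-double-dot). d(R) = M r(R) r-dot(R) / R.\<close>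
definition strong_solution :: "(real \<Rightarrow> real) \<Rightarrow> nat \<Rightarrow> (real \<Rightarrow> real) \<Rightarrow> (nat \<Rightarrow> real \<Rightarrow> real) \<Rightarrow> bool" where
  "strong_solution \<rho> M r Dr \<longleftrightarrow>
     continuous_on {0..1} r \<and> Cinf_derivs {0<..1} r Dr \<and>
     (let d = (\<lambda>R. real M * r R * Dr 1 R / R) in
       \<forall>R\<in>{0<..<1}.
         real M ^ 2 * r R / R - Dr 1 R - R * Dr 2 R
           = real M * deriv (deriv \<rho>) (d R) * deriv d R * r R) \<and>
     r 0 = 0 \<and> r 1 = 1"

end

theory Submission
  imports Defs
begin

lemma flat_left_deriv:
  fixes f :: "real \<Rightarrow> real"
  assumes d: "(f has_real_derivative l) (at x)" and c: "\<forall>y\<le>x. f y = c"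
  shows "l = 0"
proof (rule ccontr)
  assume "l \<noteq> 0"
  then consider "l > 0" | "l < 0" by linarith
  then show False
  proof cases
    case 1
    from DERIV_pos_inc_left[OF d 1] obtain e where "e > 0" "\<forall>h>0. h < e \<longrightarrow> f (x - h) < f x" by blast
    then have "f (x - e/2) < f x" by auto
    moreover have "f (x - e/2) = c" "f x = c" using c \<open>e>0\<close> by auto
    ultimately show False by auto
  next
    case 2
    from DERIV_neg_dec_left[OF d 2] obtain e where "e > 0" "\<forall>h>0. h < e \<longrightarrow> f x < f (x - h)" by blast
    then have "f x < f (x - e/2)" by auto
    moreover have "f (x - e/2) = c" "f x = c" using c \<open>e>0\<close> by auto
    ultimately show False by auto
  qed
qed

lemma rho_dd0:
  assumes "rho_assms \<gamma> s0 \<kappa> \<rho>"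
  shows "deriv (deriv \<rho>) 0 = 0"
proof -
  from assms obtain D where D: "Cinf_derivs UNIV \<rho> D" and z: "\<forall>s\<le>0. \<rho> s = 0"
    unfolding rho_assms_def Cinf_on_def by blast
  have D0: "D 0 = \<rho>" using D unfolding Cinf_derivs_def by auto
  have DD: "\<And>n x. (D n has_real_derivative D (Suc n) x) (at x)" using D unfolding Cinf_derivs_def by auto
  have d1: "deriv \<rho> = D 1"
  proof
    fix x show "deriv \<rho> x = D 1 x" using DD[of 0 x] D0 by (simp add: DERIV_imp_deriv)
  qed
  have D1z: "\<forall>y\<le>0. D 1 y = 0"
  proof (intro allI impI)
    fix y :: real assume "y \<le> 0"
    have "(\<rho> has_real_derivative D 1 y) (at y)" using DD[of 0 y] D0 by simp
    moreover have "\<forall>t\<le>y. \<rho> t = 0" using z \<open>y \<le> 0\<close> by auto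
    ultimately show "D 1 y = 0" by (rule flat_left_deriv)
  qed
  have "D 2 0 = 0"
    using flat_left_deriv[OF DD[of 1 0], of 0] D1z by (simp add: numeral_2_eq_2)
  moreover have "deriv (D 1) 0 = D 2 0" using DD[of 1 0] by (simp add: DERIV_imp_deriv numeral_2_eq_2)
  ultimately show ?thesis using d1 by simp
qed

lemma r_derivs:
  assumes "strong_solution \<rho> M r Dr" and "x \<in> {0<..<1}"
  shows "(r has_real_derivative Dr 1 x) (at x)" "(Dr 1 has_real_derivative Dr 2 x) (at x)"
proof -
  have C: "Cinf_derivs {0<..1} r Dr" using assms(1) unfolding strong_solution_def by auto
  have int: "x \<in> interior {0<..1::real}" using assms(2) by auto
  have a: "at x within {0<..1} = at x" by (rule at_within_interior[OF int])
  have "(Dr 0 has_real_derivative Dr 1 x) (at x)"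
    using C assms(2) a unfolding Cinf_derivs_def by (metis One_nat_def greaterThanLessThan_iff greaterThanAtMost_iff less_imp_le)
  then show "(r has_real_derivative Dr 1 x) (at x)"
    apply (rule has_field_derivative_transform_within_open[where S="{0<..<1}"])
    using assms(2) C unfolding Cinf_derivs_def by auto
  show "(Dr 1 has_real_derivative Dr 2 x) (at x)"
    using C assms(2) a unfolding Cinf_derivs_def
    by (metis Suc_1 greaterThanLessThan_iff greaterThanAtMost_iff less_imp_le)
qed

lemma crit:
  assumes rho: "rho_assms \<gamma> s0 \<kappa> \<rho>" and ss: "strong_solution \<rho> M r Dr"
    and x: "x \<in> {0<..<1}" and z: "Dr 1 x = 0"
  shows "x * Dr 2 x = real M ^ 2 * r x / x"
proof -
  have E: "real M ^ 2 * r x / x - Dr 1 x - x * Dr 2 x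
      = real M * deriv (deriv \<rho>) (real M * r x * Dr 1 x / x) * deriv (\<lambda>R. real M * r R * Dr 1 R / R) x * r x"
    using ss x unfolding strong_solution_def Let_def by blast
  then show ?thesis using z rho_dd0[OF rho] by simp
qed

lemma move:
  assumes rho: "rho_assms \<gamma> s0 \<kappa> \<rho>" and ss: "strong_solution \<rho> M r Dr" and M: "M \<ge> 1"
    and x: "x \<in> {0<..<1}" and z: "Dr 1 x = 0" and nz: "r x \<noteq> 0" and e: "\<epsilon> > 0"
  shows "\<exists>h>0. h < \<epsilon> \<and> x + h < 1 \<and> (r (x + h) - r x) * r x > 0"
proof -
  have cr: "x * Dr 2 x = real M ^ 2 * r x / x" by (rule crit[OF rho ss x z])
  have xp: "x > 0" "x < 1" using x by auto
  have Mp: "real M ^ 2 > 0" using M by simp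
  have sg: "Dr 2 x * r x > 0"
  proof -
    have "x * Dr 2 x * r x = real M ^ 2 * (r x * r x) / x" using cr by (simp add: algebra_simps)
    moreover have "real M ^ 2 * (r x * r x) / x > 0" proof -
      have "r x * r x > 0" using nz by (auto simp: zero_less_mult_iff linorder_neq_iff)
      then show ?thesis using Mp xp by simp
    qed
    ultimately have "x * (Dr 2 x * r x) > 0" by (simp add: algebra_simps)
    then show ?thesis using xp by (simp add: zero_less_mult_iff)
  qed
  have D2: "(Dr 1 has_real_derivative Dr 2 x) (at x)" by (rule r_derivs(2)[OF ss x])
  obtain d where d: "d > 0" "\<forall>h>0. h < d \<longrightarrow> Dr 1 (x + h) * r x > 0"
  proof (cases "r x > 0")
    case True
    then have "Dr 2 x > 0" using sg by (simp add: zero_less_mult_iff)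
    from DERIV_pos_inc_right[OF D2 this] obtain d where "d>0" "\<forall>h>0. h < d \<longrightarrow> Dr 1 x < Dr 1 (x + h)" by blast
    then show ?thesis using that True z by auto
  next
    case False
    then have rn: "r x < 0" using nz by auto
    then have "Dr 2 x < 0" using sg by (simp add: zero_less_mult_iff)
    from DERIV_neg_dec_right[OF D2 this] obtain d where "d>0" "\<forall>h>0. h < d \<longrightarrow> Dr 1 x > Dr 1 (x + h)" by blast
    then show ?thesis using that rn z by (auto simp: mult_neg_neg)
  qed
  define h where "h = min d (min \<epsilon> (1 - x)) / 2"
  have h: "h > 0" "h < d" "h < \<epsilon>" "x + h < 1" proof -
    have m: "min d (min \<epsilon> (1 - x)) > 0" "min d (min \<epsilon> (1 - x)) \<le> d"
      "min d (min \<epsilon> (1 - x)) \<le> \<epsilon>" "min d (min \<epsilon> (1 - x)) \<le> 1 - x"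
      using d e xp by auto
    show "h > 0" "h < d" "h < \<epsilon>" "x + h < 1" unfolding h_def using m by linarith+
  qed
  have "\<exists>zz. x < zz \<and> zz < x + h \<and> r (x + h) - r x = (x + h - x) * Dr 1 zz"
  proof (rule MVT2)
    show "x < x + h" using h by simp
    fix t assume "x \<le> t" "t \<le> x + h"
    then have "t \<in> {0<..<1}" using h xp by auto
    then show "(r has_real_derivative Dr 1 t) (at t)" by (rule r_derivs(1)[OF ss])
  qed
  then obtain zz where zz: "x < zz" "zz < x + h" "r (x + h) - r x = h * Dr 1 zz" by auto
  have "Dr 1 (x + (zz - x)) * r x > 0" using zz h by (intro d(2)[rule_format]) auto
  then have "Dr 1 zz * r x > 0" by simp
  then have "(r (x + h) - r x) * r x > 0" using zz(3) h(1) by (simp add: mult.assoc)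
  then show ?thesis using h by blast
qed

theorem lemma2p3:
  fixes \<gamma> s0 \<kappa> :: real and \<rho> r :: "real \<Rightarrow> real" and Dr :: "nat \<Rightarrow> real \<Rightarrow> real" and M :: nat
  assumes "rho_assms \<gamma> s0 \<kappa> \<rho>"
    and "M \<ge> 1"
    and "strong_solution \<rho> M r Dr"
  shows "(\<forall>R\<in>{0..1}. r R \<ge> 0) \<and> (\<forall>R\<in>{0<..1}. Dr 1 R \<ge> 0)"
proof -
  note rho = assms(1) and M = assms(2) and ss = assms(3)
  have cont: "continuous_on {0..1} r" and r0: "r 0 = 0" and r1: "r 1 = 1"
    and C: "Cinf_derivs {0<..1} r Dr"
    using ss unfolding strong_solution_def by auto
  have nonneg: "\<forall>R\<in>{0..1}. r R \<ge> 0"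
  proof (rule ccontr)
    assume "\<not> ?thesis"
    then obtain R where R: "R \<in> {0..1}" "r R < 0" by force
    obtain x where x: "x \<in> {0..1}" "\<forall>y\<in>{0..1}. r x \<le> r y"
      using continuous_attains_inf[OF compact_Icc _ cont] by auto
    have rx: "r x < 0" using x R by force
    then have "x \<noteq> 0" "x \<noteq> 1" using r0 r1 by auto
    then have xi: "x \<in> {0<..<1}" using x by auto
    have "Dr 1 x = 0"
    proof (rule DERIV_local_min[OF r_derivs(1)[OF ss xi]])
      show "0 < min x (1 - x)" using xi by auto
      show "\<forall>y. \<bar>x - y\<bar> < min x (1 - x) \<longrightarrow> r x \<le> r y" using x(2) by (auto simp: abs_less_iff)
    qed
    from move[OF rho ss M xi this _ zero_less_one] rx
    obtain h where "h > 0" "x + h < 1" "(r (x + h) - r x) * r x > 0" by auto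
    then have "r (x + h) < r x" using rx by (simp add: zero_less_mult_iff)
    moreover have "x + h \<in> {0..1}" using xi \<open>h>0\<close> \<open>x+h<1\<close> by auto
    ultimately show False using x(2) by force
  qed
  have mono: "\<forall>R\<in>{0<..1}. Dr 1 R \<ge> 0"
  proof (rule ccontr)
    assume "\<not> ?thesis"
    then obtain R where R: "R \<in> {0<..1}" "Dr 1 R < 0" by force
    have "(Dr 0 has_real_derivative Dr 1 R) (at R within {0<..1})"
      using C R unfolding Cinf_derivs_def by (metis One_nat_def)
    from has_real_derivative_neg_dec_left[OF this R(2)]
    obtain e where e: "e > 0" "\<forall>h>0. R - h \<in> {0<..1} \<longrightarrow> h < e \<longrightarrow> Dr 0 R < Dr 0 (R - h)" by blast
    define p where "p = R - min e R / 2"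
    have p: "p \<in> {0<..<R}" using e R unfolding p_def by auto
    have "Dr 0 R < Dr 0 p" using e(2)[rule_format, of "min e R / 2"] p R unfolding p_def by auto
    moreover have "Dr 0 R = r R" "Dr 0 p = r p" using C R p unfolding Cinf_derivs_def by auto
    ultimately have rp: "r R < r p" by simp
    have cont': "continuous_on {0..R} r" using R by (intro continuous_on_subset[OF cont]) auto
    obtain x where x: "x \<in> {0..R}" "\<forall>y\<in>{0..R}. r y \<le> r x"
      using continuous_attains_sup[OF compact_Icc _ cont'] R by auto
    have rpx: "r p \<le> r x" using x p by auto
    have rR: "r R \<ge> 0" using nonneg R by auto
    have rx: "r x > 0" using rp rpx rR by linarith
    have "x \<noteq> 0" using rx r0 by auto
    moreover have "x \<noteq> R" using rp rpx by auto
    ultimately have xR: "0 < x" "x < R" using x by auto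
    then have xi: "x \<in> {0<..<1}" using R by auto
    have "Dr 1 x = 0"
    proof (rule DERIV_local_max[OF r_derivs(1)[OF ss xi]])
      show "0 < min x (R - x)" using xR by auto
      show "\<forall>y. \<bar>x - y\<bar> < min x (R - x) \<longrightarrow> r y \<le> r x" using x(2) by (auto simp: abs_less_iff)
    qed
    from move[OF rho ss M xi this _ , of "R - x"] rx xR
    obtain h where "h > 0" "h < R - x" "(r (x + h) - r x) * r x > 0" by auto
    then have "r (x + h) > r x" using rx by (simp add: zero_less_mult_iff)
    moreover have "x + h \<in> {0..R}" using xR \<open>h>0\<close> \<open>h < R - x\<close> by auto
    ultimately show False using x(2) by force
  qed
  show ?thesis using nonneg mono by blast
qed

end
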